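(* Let $\Gamma\in F(L)$ be homogeneous with $i$ letters $x$ and $j$ letters $y$, where $i+j$ is even and $i\le 3$. Then $\operatorname{div}(u_\Gamma)=0$.
   Context: $A=\mathbb{R}\langle x,y\rangle$; $L\subset A$ the free Lie algebra on $x,y$. $\operatorname{tr}$ is the projection $A\to A/\operatorname{span}\{ab-ba\}$. $F(L)$ is the quotient of $L\otimes L$ by the span of $a\otimes b-b\otimes a$ and $a\otimes[b,c]-[a,b]\otimes c$, regarded inside $A/\operatorname{span}\{ab-ba\}$ via $a\otimes b\mapsto\operatorname{tr}(ab)$. For $x_0\in\{x,y\}$, $\partial_{x_0}$ maps cyclic words by $\operatorname{tr}(a_1\cdots a_n)\mapsto\sum_{i:\,a_i=x_0}a_{i+1}\cdots a_n a_1\cdots a_{i-1}$. For $\Gamma\in F(L)$, $u_\Gamma$ is the derivation of $L$ with $u_\Gamma(x)=\partial_y\Gamma$, $u_\Gamma(y)=-\partial_x\Gamma$. For $l\in A$, $\partial^L_{x_0}(l)=\sum\partial^1\epsilon(\partial^2)$, where $\sum\partial^1\otimes\partial^2$ is the sum over occurrences of $x_0$ in monomials of (prefix)$\otimes$(suffix), and $\epsilon$ is the constant term. $\operatorname{div}(u)=\operatorname{tr}(\partial^L_x(u(x))+\partial^L_y(u(y)))$. *)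

theory Defs
  imports Complex_Main "HOL-Library.Function_Algebras"
begin

datatype letter = X | Y

(* Elements of A: coefficient functions on words (finite support required where relevant).
   Addition/subtraction/zero/finite sums are pointwise (Function_Algebras).
   NOTE: the pointwise '*' from Function_Algebras is NOT used; the product of A is ncmul. *)
type_synonym ncpoly = "letter list \<Rightarrow> real"

definition supp :: "ncpoly \<Rightarrow> letter list set" where
  "supp p = {w. p w \<noteq> 0}"

definition finpoly :: "ncpoly \<Rightarrow> bool" where
  "finpoly p \<longleftrightarrow> finite (supp p)"

definition mono :: "letter list \<Rightarrow> ncpoly" where
  "mono w = (\<lambda>v. if v = w then 1 else 0)"

definition scl :: "real \<Rightarrow> ncpoly \<Rightarrow> ncpoly" where
  "scl c p = (\<lambda>w. c * p w)"

definition ncmul :: "ncpoly \<Rightarrow> ncpoly \<Rightarrow> ncpoly" where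
  "ncmul p q = (\<lambda>w. \<Sum>k\<le>length w. p (take k w) * q (drop k w))"

definition eps :: "ncpoly \<Rightarrow> real" where
  "eps p = p []"

definition gen :: "letter \<Rightarrow> ncpoly" where
  "gen c = mono [c]"

inductive_set lie :: "ncpoly set" where
  lie_gen: "gen c \<in> lie"
| lie_add: "p \<in> lie \<Longrightarrow> q \<in> lie \<Longrightarrow> p + q \<in> lie"
| lie_scl: "p \<in> lie \<Longrightarrow> scl c p \<in> lie"
| lie_br: "p \<in> lie \<Longrightarrow> q \<in> lie \<Longrightarrow> ncmul p q - ncmul q p \<in> lie"

inductive_set comspan :: "ncpoly set" where
  cs_zero: "0 \<in> comspan"
| cs_comm: "finpoly a \<Longrightarrow> finpoly b \<Longrightarrow> ncmul a b - ncmul b a \<in> comspan"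
| cs_add: "p \<in> comspan \<Longrightarrow> q \<in> comspan \<Longrightarrow> p + q \<in> comspan"
| cs_scl: "p \<in> comspan \<Longrightarrow> scl c p \<in> comspan"

(* tr : A -> A/span{ab-ba}; the class of p *)
definition tr :: "ncpoly \<Rightarrow> ncpoly set" where
  "tr p = {q. finpoly q \<and> p - q \<in> comspan}"

(* F(L), regarded inside A/span{ab-ba} via a \<otimes> b \<mapsto> tr(ab) *)
definition FL :: "ncpoly set set" where
  "FL = {tr (\<Sum>k<n. ncmul (a k) (b k)) | (n::nat) (a::nat \<Rightarrow> ncpoly) (b::nat \<Rightarrow> ncpoly). \<forall>k<n. a k \<in> lie \<and> b k \<in> lie}"

definition homog :: "ncpoly \<Rightarrow> nat \<Rightarrow> nat \<Rightarrow> bool" where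
  "homog p i j \<longleftrightarrow> (\<forall>w. p w \<noteq> 0 \<longrightarrow> count_list w X = i \<and> count_list w Y = j)"

(* cyclic derivative on a cyclic word tr(a_1...a_n) given by the word v = a_1...a_n:
   sum over i with a_i = x0 of a_{i+1}...a_n a_1...a_{i-1} *)
definition cycdw :: "letter \<Rightarrow> letter list \<Rightarrow> ncpoly" where
  "cycdw c v = (\<Sum>i<length v. if v ! i = c then mono (drop (Suc i) v @ take i v) else 0)"

(* extended linearly; applied to a representative g of Gamma = tr g *)
definition cycd :: "letter \<Rightarrow> ncpoly \<Rightarrow> ncpoly" where
  "cycd c g = (\<Sum>v\<in>supp g. scl (g v) (cycdw c v))"

(* derivation of A determined by its values f on the generators *)
definition derw :: "(letter \<Rightarrow> ncpoly) \<Rightarrow> letter list \<Rightarrow> ncpoly" where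
  "derw f v = (\<Sum>i<length v. ncmul (ncmul (mono (take i v)) (f (v ! i))) (mono (drop (Suc i) v)))"

definition der :: "(letter \<Rightarrow> ncpoly) \<Rightarrow> ncpoly \<Rightarrow> ncpoly" where
  "der f p = (\<Sum>v\<in>supp p. scl (p v) (derw f v))"

definition uGamma :: "ncpoly \<Rightarrow> ncpoly \<Rightarrow> ncpoly" where
  "uGamma g = der (\<lambda>c. if c = X then cycd Y g else - cycd X g)"

definition dLw :: "letter \<Rightarrow> letter list \<Rightarrow> ncpoly" where
  "dLw c v = (\<Sum>i<length v. if v ! i = c then scl (eps (mono (drop (Suc i) v))) (mono (take i v)) else 0)"

definition dL :: "letter \<Rightarrow> ncpoly \<Rightarrow> ncpoly" where
  "dL c p = (\<Sum>v\<in>supp p. scl (p v) (dLw c v))"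

definition divergence :: "(ncpoly \<Rightarrow> ncpoly) \<Rightarrow> ncpoly set" where
  "divergence u = tr (dL X (u (gen X)) + dL Y (u (gen Y)))"

end

theory Submission
  imports Defs
begin


lemma fsum_apply: "(sum f A) x = sum (\<lambda>a. f a x) A"
  by (induction A rule: infinite_finite_induct) auto

lemma scl_apply[simp]: "scl c p w = c * p w" by (simp add: scl_def)
lemma mono_apply: "mono u w = (if w = u then 1 else 0)" by (simp add: mono_def)

definition lin :: "(letter list \<Rightarrow> ncpoly) \<Rightarrow> ncpoly \<Rightarrow> ncpoly" where
  "lin F p = (\<Sum>v\<in>supp p. scl (p v) (F v))"

lemma lin_super: assumes "finite A" "supp p \<subseteq> A"
  shows "lin F p = (\<Sum>v\<in>A. scl (p v) (F v))"
  unfolding lin_def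
  by (rule sum.mono_neutral_left[OF assms(1) assms(2)]) (auto simp: supp_def scl_def)

lemma lin_apply: assumes "finite A" "supp p \<subseteq> A"
  shows "lin F p w = (\<Sum>v\<in>A. p v * F v w)"
  using lin_super[OF assms] by (simp add: fsum_apply)

lemma supp_add: "supp (p + q) \<subseteq> supp p \<union> supp q" by (auto simp: supp_def)
lemma supp_diff: "supp (p - q) \<subseteq> supp p \<union> supp q" by (auto simp: supp_def)
lemma supp_uminus: "supp (- p) = supp p" by (auto simp: supp_def)
lemma supp_scl: "supp (scl c p) \<subseteq> supp p" by (auto simp: supp_def)
lemma supp_mono: "supp (mono u) = {u}" by (auto simp: supp_def mono_def)
lemma supp_zero: "supp 0 = {}" by (auto simp: supp_def)

lemma fin_add: "finpoly p \<Longrightarrow> finpoly q \<Longrightarrow> finpoly (p + q)"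
  unfolding finpoly_def by (meson finite_UnI finite_subset supp_add)
lemma fin_diff: "finpoly p \<Longrightarrow> finpoly q \<Longrightarrow> finpoly (p - q)"
  unfolding finpoly_def by (meson finite_UnI finite_subset supp_diff)
lemma fin_uminus: "finpoly p \<Longrightarrow> finpoly (- p)"
  unfolding finpoly_def by (simp add: supp_uminus)
lemma fin_scl: "finpoly p \<Longrightarrow> finpoly (scl c p)"
  unfolding finpoly_def by (meson finite_subset supp_scl)
lemma fin_mono: "finpoly (mono u)" unfolding finpoly_def by (simp add: supp_mono)
lemma fin_zero: "finpoly 0" unfolding finpoly_def by (simp add: supp_zero)
lemma fin_sum: "(\<And>a. a \<in> A \<Longrightarrow> finpoly (f a)) \<Longrightarrow> finpoly (sum f A)"
  by (induction A rule: infinite_finite_induct) (auto simp: fin_zero fin_add)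

lemma lin_add: assumes "finpoly p" "finpoly q"
  shows "lin F (p + q) = lin F p + lin F q"
proof
  fix w
  let ?A = "supp p \<union> supp q"
  have f: "finite ?A" using assms by (simp add: finpoly_def)
  show "lin F (p + q) w = (lin F p + lin F q) w"
  proof -
    have "lin F (p + q) w = (\<Sum>v\<in>?A. (p + q) v * F v w)" using lin_apply[OF f supp_add] .
    also have "\<dots> = (\<Sum>v\<in>?A. p v * F v w) + (\<Sum>v\<in>?A. q v * F v w)"
      by (simp add: sum.distrib distrib_right)
    also have "\<dots> = lin F p w + lin F q w"
      using lin_apply[OF f, of p F w] lin_apply[OF f, of q F w] by simp
    finally show ?thesis by simp
  qed
qed

lemma lin_scl: assumes "finpoly p"
  shows "lin F (scl c p) = scl c (lin F p)"
proof
  fix w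
  have f: "finite (supp p)" using assms by (simp add: finpoly_def)
  show "lin F (scl c p) w = scl c (lin F p) w"
    using lin_apply[OF f supp_scl[of c p], of F w] lin_apply[OF f, of p F w]
    by (simp add: sum_distrib_left mult.assoc)
qed

lemma lin_uminus: assumes "finpoly p"
  shows "lin F (- p) = - lin F p"
proof
  fix w
  have f: "finite (supp p)" using assms by (simp add: finpoly_def)
  show "lin F (- p) w = (- lin F p) w"
    using lin_apply[OF f, of "-p" F w] lin_apply[OF f, of p F w]
    by (simp add: supp_uminus sum_negf)
qed

lemma lin_diff: assumes "finpoly p" "finpoly q"
  shows "lin F (p - q) = lin F p - lin F q"
  using lin_add[OF assms(1) fin_uminus[OF assms(2)]] lin_uminus[OF assms(2)]
  by simp

lemma lin_zero: "lin F 0 = 0" by (simp add: lin_def supp_zero)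

lemma lin_mono: "lin F (mono u) = F u"
  by (simp add: lin_def supp_mono, simp add: mono_def scl_def)

lemma lin_sum: assumes "\<And>a. a \<in> A \<Longrightarrow> finpoly (f a)"
  shows "lin F (sum f A) = (\<Sum>a\<in>A. lin F (f a))"
  using assms
proof (induction A rule: infinite_finite_induct)
  case (insert x A)
  have e1: "sum f (insert x A) = f x + sum f A" by (rule sum.insert[OF insert(1,2)])
  have e2: "(\<Sum>a\<in>insert x A. lin F (f a)) = lin F (f x) + (\<Sum>a\<in>A. lin F (f a))"
    by (rule sum.insert[OF insert(1,2)])
  have e3: "lin F (f x + sum f A) = lin F (f x) + lin F (sum f A)" using insert by (intro lin_add fin_sum) auto
  have e4: "lin F (sum f A) = (\<Sum>a\<in>A. lin F (f a))" using insert by auto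
  show ?case unfolding e1 e2 e3 e4 ..
qed (auto simp: lin_zero)

lemma lin_fin: assumes "finpoly p" "\<And>v. finpoly (F v)" shows "finpoly (lin F p)"
  unfolding lin_def by (intro fin_sum fin_scl assms)

lemma lin_comp: assumes "finpoly p" "\<And>v. finpoly (F v)"
  shows "lin G (lin F p) = lin (\<lambda>v. lin G (F v)) p"
  unfolding lin_def[of F p] lin_def[of "\<lambda>v. lin G (F v)" p]
  by (subst lin_sum) (auto intro!: sum.cong fin_scl assms simp: lin_scl assms)

lemma lin_cong: "(\<And>v. v \<in> supp p \<Longrightarrow> F v = G v) \<Longrightarrow> lin F p = lin G p"
  unfolding lin_def by (rule sum.cong) auto

lemma lin_self: assumes "finpoly p" shows "lin mono p = p"
proof
  fix w
  have f: "finite (supp p)" using assms by (simp add: finpoly_def)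
  have "lin mono p w = (\<Sum>v\<in>supp p. p v * mono v w)" using lin_apply[OF f] by simp
  also have "\<dots> = (\<Sum>v\<in>supp p. if v = w then p v else 0)"
    by (rule sum.cong) (auto simp: mono_def)
  also have "\<dots> = p w" using f by (simp add: supp_def)
  finally show "lin mono p w = p w" .
qed



lemma take_drop_eq_iff: "k \<le> length w \<Longrightarrow> (take k w = u \<and> drop k w = v) \<longleftrightarrow> (k = length u \<and> w = u @ v)"
  by (metis append_eq_conv_conj append_take_drop_id length_take min.absorb2)

lemma ncmul_mono: "ncmul (mono u) (mono v) = mono (u @ v)"
proof
  fix w
  have "mono u (take k w) * mono v (drop k w) = (if k = length u then (if w = u @ v then 1 else 0) else 0)"
    if "k \<in> {..length w}" for k
  proof -
    have "k \<le> length w" using that by simp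
    have "mono u (take k w) * mono v (drop k w) = (if take k w = u \<and> drop k w = v then 1 else 0)"
      by (simp add: mono_def)
    also have "\<dots> = (if k = length u \<and> w = u @ v then 1 else 0)"
      by (simp only: take_drop_eq_iff[OF \<open>k \<le> length w\<close>])
    finally show ?thesis by simp
  qed
  then have "ncmul (mono u) (mono v) w = (\<Sum>k\<le>length w. if k = length u then (if w = u @ v then 1 else 0) else 0)"
    unfolding ncmul_def by (rule sum.cong[OF refl])
  also have "\<dots> = mono (u @ v) w" by (auto simp: mono_def)
  finally show "ncmul (mono u) (mono v) w = mono (u @ v) w" .
qed

lemma ncmul_one_left: "ncmul (mono []) p = p"
proof
  fix w
  have "ncmul (mono []) p w = (\<Sum>k\<le>length w. if k = 0 then p w else 0)"
    unfolding ncmul_def by (rule sum.cong[OF refl]) (cases "w = []", auto simp: mono_def)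
  then show "ncmul (mono []) p w = p w" by simp
qed

lemma ncmul_one_right: "ncmul p (mono []) = p"
proof
  fix w
  have "ncmul p (mono []) w = (\<Sum>k\<le>length w. if k = length w then p w else 0)"
    unfolding ncmul_def by (rule sum.cong[OF refl]) (auto simp: mono_def)
  then show "ncmul p (mono []) w = p w" by simp
qed

lemma ncmul_sum_left: "ncmul (sum f A) q = (\<Sum>a\<in>A. ncmul (f a) q)"
  by (rule ext) (simp add: ncmul_def fsum_apply sum_distrib_right sum.swap[of _ A])

lemma ncmul_sum_right: "ncmul q (sum f A) = (\<Sum>a\<in>A. ncmul q (f a))"
  by (rule ext) (simp add: ncmul_def fsum_apply sum_distrib_left sum.swap[of _ A])

lemma ncmul_scl_left: "ncmul (scl c p) q = scl c (ncmul p q)"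
  by (rule ext) (simp add: ncmul_def sum_distrib_left mult.assoc)

lemma ncmul_scl_right: "ncmul p (scl c q) = scl c (ncmul p q)"
  by (rule ext) (simp add: ncmul_def sum_distrib_left mult.assoc mult.left_commute)

lemma ncmul_neg: "ncmul (- p) (- q) = ncmul p q"
  by (rule ext) (simp add: ncmul_def)

lemma scl_sum: "scl c (sum f A) = (\<Sum>a\<in>A. scl c (f a))"
  by (rule ext) (simp add: fsum_apply sum_distrib_left)

lemma ncmul_expand: assumes "finpoly a" "finpoly b"
  shows "ncmul a b = (\<Sum>u\<in>supp a. \<Sum>v\<in>supp b. scl (a u * b v) (mono (u @ v)))"
proof -
  have "ncmul a b = ncmul (lin mono a) (lin mono b)" using assms by (simp add: lin_self)
  also have "\<dots> = (\<Sum>v\<in>supp b. \<Sum>u\<in>supp a. scl (b v) (scl (a u) (ncmul (mono u) (mono v))))"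
    unfolding lin_def ncmul_sum_left ncmul_sum_right ncmul_scl_left ncmul_scl_right scl_sum
    by (rule refl)
  also have "\<dots> = (\<Sum>u\<in>supp a. \<Sum>v\<in>supp b. scl (b v) (scl (a u) (ncmul (mono u) (mono v))))"
    by (rule sum.swap)
  also have "\<dots> = (\<Sum>u\<in>supp a. \<Sum>v\<in>supp b. scl (a u * b v) (mono (u @ v)))"
    by (intro sum.cong refl) (simp add: ncmul_mono scl_def mult_ac)
  finally show ?thesis .
qed

lemma fin_ncmul: "finpoly a \<Longrightarrow> finpoly b \<Longrightarrow> finpoly (ncmul a b)"
  by (simp add: ncmul_expand fin_sum fin_scl fin_mono)

definition Rev :: "ncpoly \<Rightarrow> ncpoly" where "Rev p = (\<lambda>w. p (rev w))"
definition Sg :: "ncpoly \<Rightarrow> ncpoly" where "Sg p = (\<lambda>w. (-1) ^ length w * p (rev w))"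

lemma Sg_ncmul: "Sg (ncmul p q) = ncmul (Sg q) (Sg p)"
proof
  fix w :: "letter list"
  let ?n = "length w"
  have "Sg (ncmul p q) w = (-1) ^ ?n * (\<Sum>k<Suc ?n. p (take k (rev w)) * q (drop k (rev w)))"
    by (simp add: Sg_def ncmul_def atMost_atLeast0 lessThan_Suc_atMost)
  also have "\<dots> = (-1) ^ ?n * (\<Sum>k<Suc ?n. p (take (?n - k) (rev w)) * q (drop (?n - k) (rev w)))"
    by (subst sum.nat_diff_reindex[symmetric]) simp
  also have "\<dots> = (\<Sum>k<Suc ?n. ((-1) ^ k * q (rev (take k w))) * ((-1) ^ length (drop k w) * p (rev (drop k w))))"
    unfolding sum_distrib_left
  proof (rule sum.cong[OF refl])
    fix k assume "k \<in> {..<Suc ?n}"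
    then have k: "k \<le> ?n" by simp
    have e: "(-1::real) ^ ?n = (-1) ^ k * (-1) ^ length (drop k w)"
      using k by (simp add: power_add[symmetric])
    have t: "take (?n - k) (rev w) = rev (drop k w)" "drop (?n - k) (rev w) = rev (take k w)"
      using k by (simp_all add: take_rev drop_rev)
    show "(-1) ^ ?n * (p (take (?n - k) (rev w)) * q (drop (?n - k) (rev w))) =
      ((-1) ^ k * q (rev (take k w))) * ((-1) ^ length (drop k w) * p (rev (drop k w)))"
      unfolding t e by (simp add: mult_ac)
  qed
  also have "\<dots> = ncmul (Sg q) (Sg p) w"
    by (simp add: Sg_def ncmul_def atMost_atLeast0 lessThan_Suc_atMost min_absorb2)
  finally show "Sg (ncmul p q) w = ncmul (Sg q) (Sg p) w" .
qed

lemma Sg_add: "Sg (p + q) = Sg p + Sg q" by (rule ext) (simp add: Sg_def algebra_simps)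
lemma Sg_diff: "Sg (p - q) = Sg p - Sg q" by (rule ext) (simp add: Sg_def algebra_simps)
lemma Sg_scl: "Sg (scl c p) = scl c (Sg p)" by (rule ext) (simp add: Sg_def algebra_simps)
lemma Sg_uminus: "Sg (- p) = - Sg p" by (rule ext) (simp add: Sg_def algebra_simps)
lemma Sg_zero: "Sg 0 = 0" by (rule ext) (simp add: Sg_def)
lemma Sg_sum: "Sg (sum f A) = (\<Sum>a\<in>A. Sg (f a))"
  by (rule ext) (simp add: Sg_def fsum_apply sum_distrib_left)
lemma fin_Sg: "finpoly p \<Longrightarrow> finpoly (Sg p)"
proof -
  assume "finpoly p"
  moreover have "supp (Sg p) \<subseteq> rev ` supp p"
    by (auto simp: supp_def Sg_def intro!: image_eqI[where x="rev _"])
  ultimately show ?thesis unfolding finpoly_def by (meson finite_imageI finite_subset)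
qed

lemma Sg_gen: "Sg (gen c) = - gen c"
proof
  fix w :: "letter list"
  have "rev w = [c] \<longleftrightarrow> w = [c]" by auto
  then show "Sg (gen c) w = (- gen c) w"
    by (auto simp: Sg_def gen_def mono_def)
qed

lemma lie_S0: "a \<in> lie \<Longrightarrow> finpoly a \<and> (\<forall>w. Sg a w = - a w)"
proof (induction rule: lie.induct)
  case (lie_gen c)
  show ?case using Sg_gen[of c] fin_mono[of "[c]"] unfolding gen_def by (simp add: fun_eq_iff)
next
  case (lie_add p q)
  have "finpoly (p + q)" using lie_add by (intro fin_add) auto
  moreover have "Sg (p + q) w = - (p + q) w" for w
    using lie_add by (simp add: Sg_def algebra_simps)
  ultimately show ?case by blast
next
  case (lie_scl p c)
  have "finpoly (scl c p)" using lie_scl by (intro fin_scl) auto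
  moreover have "Sg (scl c p) w = - (scl c p) w" for w
    using lie_scl by (simp add: Sg_def algebra_simps)
  ultimately show ?case by blast
next
  case (lie_br p q)
  then have "Sg p = - p" "Sg q = - q" by (auto simp: fun_eq_iff)
  then have eq: "Sg (ncmul p q - ncmul q p) = ncmul q p - ncmul p q"
    by (simp only: Sg_diff Sg_ncmul ncmul_neg)
  have "finpoly (ncmul p q - ncmul q p)" using lie_br by (intro fin_diff fin_ncmul) auto
  moreover have "Sg (ncmul p q - ncmul q p) w = - (ncmul p q - ncmul q p) w" for w
    unfolding eq by simp
  ultimately show ?case by blast
qed

lemma lie_S: "a \<in> lie \<Longrightarrow> finpoly a \<and> Sg a = - a"
  using lie_S0[of a] by (auto simp: fun_eq_iff)

lemma cs_fin: "c \<in> comspan \<Longrightarrow> finpoly c"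
proof (induction rule: comspan.induct)
  case cs_zero show ?case by (rule fin_zero)
next
  case (cs_comm a b) show ?case by (intro fin_diff fin_ncmul cs_comm)
next
  case (cs_add p q) show ?case by (intro fin_add cs_add)
next
  case (cs_scl p c) show ?case by (intro fin_scl cs_scl)
qed

lemma cs_uminus: "c \<in> comspan \<Longrightarrow> - c \<in> comspan"
proof -
  assume "c \<in> comspan"
  then have "scl (-1) c \<in> comspan" by (rule cs_scl)
  moreover have "scl (-1) c = - c" by (rule ext) (simp add: scl_def)
  ultimately show ?thesis by simp
qed

lemma cs_diff: "p \<in> comspan \<Longrightarrow> q \<in> comspan \<Longrightarrow> p - q \<in> comspan"
  using cs_add[OF _ cs_uminus, of p q] by (simp only: diff_conv_add_uminus)

lemma cs_sum: "(\<And>a. a \<in> A \<Longrightarrow> f a \<in> comspan) \<Longrightarrow> sum f A \<in> comspan"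
proof (induction A rule: infinite_finite_induct)
  case (infinite A)
  have "sum f A = 0" using infinite(1) by (rule sum.infinite)
  then show ?case using cs_zero by (simp only:)
next
  case empty then show ?case using cs_zero by (simp only: sum.empty)
next
  case (insert x F)
  have "f x + sum f F \<in> comspan" using insert by (intro cs_add) auto
  then show ?case by (simp only: sum.insert[OF insert(1,2)])
qed

lemma cs_Sg: "c \<in> comspan \<Longrightarrow> Sg c \<in> comspan"
proof (induction rule: comspan.induct)
  case cs_zero then show ?case by (simp only: Sg_zero comspan.cs_zero)
next
  case (cs_comm a b)
  have "ncmul (Sg b) (Sg a) - ncmul (Sg a) (Sg b) \<in> comspan"
    by (intro comspan.cs_comm fin_Sg cs_comm)
  then show ?case by (simp only: Sg_diff Sg_ncmul)
next
  case (cs_add p q) then show ?case by (simp only: Sg_add comspan.cs_add)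
next
  case (cs_scl p c) then show ?case by (simp only: Sg_scl comspan.cs_scl)
qed

lemma cs_rot: "mono (u @ v) - mono (v @ u) \<in> comspan"
  using cs_comm[OF fin_mono fin_mono, of u v] by (simp add: ncmul_mono)



definition phi :: "letter \<Rightarrow> letter list \<Rightarrow> ncpoly" where
  "phi c t = (if t \<noteq> [] \<and> last t = c then mono (butlast t) else 0)"

definition lfw :: "letter \<Rightarrow> letter list \<Rightarrow> ncpoly" where
  "lfw c t = (if t \<noteq> [] \<and> hd t = c then mono (tl t) else 0)"

lemma eps_mono: "eps (mono u) = (if u = [] then 1 else 0)"
  by (simp add: eps_def mono_def)

lemma dLw_simp: "dLw c v = phi c v"
proof -
  have "dLw c v = (\<Sum>i<length v. if i = length v - 1 then (if v ! i = c then mono (take i v) else 0) else 0)"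
    unfolding dLw_def
  proof (rule sum.cong[OF refl])
    fix i assume "i \<in> {..<length v}"
    then have i: "i < length v" by simp
    show "(if v ! i = c then scl (eps (mono (drop (Suc i) v))) (mono (take i v)) else 0) =
      (if i = length v - 1 then (if v ! i = c then mono (take i v) else 0) else 0)"
      using i by (auto simp: eps_mono scl_def fun_eq_iff)
  qed
  also have "\<dots> = phi c v"
  proof (cases "v = []")
    case True then show ?thesis by (simp add: phi_def)
  next
    case False
    then have "length v - 1 < length v" by simp
    moreover have "v ! (length v - 1) = last v" using False by (simp add: last_conv_nth)
    moreover have "take (length v - 1) v = butlast v" by (simp add: butlast_conv_take)
    ultimately show ?thesis using False by (simp add: phi_def)
  qed
  finally show ?thesis .
qed

lemma dL_lin: "dL c p = lin (dLw c) p" by (simp add: dL_def lin_def)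
lemma cycd_lin: "cycd c p = lin (cycdw c) p" by (simp add: cycd_def lin_def)

lemma fin_phi: "finpoly (phi c t)" by (simp add: phi_def fin_mono fin_zero)
lemma fin_lfw: "finpoly (lfw c t)" by (simp add: lfw_def fin_mono fin_zero)
lemma fin_dLw: "finpoly (dLw c t)" by (simp add: dLw_simp fin_phi)

lemma rotate_Suc_nth: assumes "i < length v"
  shows "rotate (Suc i) v = drop (Suc i) v @ take i v @ [v ! i]"
proof (cases "Suc i < length v")
  case True
  then show ?thesis
    by (simp add: rotate_drop_take take_Suc_conv_app_nth[OF assms] del: rotate_Suc)
next
  case False
  then have n: "Suc i = length v" using assms by simp
  have "rotate (Suc i) v = v" unfolding n by (simp del: rotate_Suc)
  moreover have "take i v @ [v ! i] = v" using take_Suc_conv_app_nth[OF assms] n by simp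
  ultimately show ?thesis using n by simp
qed

lemma cycdw_rot: "cycdw c v = (\<Sum>i<length v. phi c (rotate (Suc i) v))"
  unfolding cycdw_def
proof (rule sum.cong[OF refl])
  fix i assume "i \<in> {..<length v}"
  then have i: "i < length v" by simp
  show "(if v ! i = c then mono (drop (Suc i) v @ take i v) else 0) = phi c (rotate (Suc i) v)"
    unfolding rotate_Suc_nth[OF i] phi_def by (simp add: butlast_append)
qed

lemma fin_cycdw: "finpoly (cycdw c v)"
  unfolding cycdw_rot by (intro fin_sum fin_phi)

lemma sum_shift: assumes "f n = f 0"
  shows "(\<Sum>i<n. f (Suc i)) = (\<Sum>i<(n::nat). (f i :: 'a::ab_group_add))"
proof -
  have "(\<Sum>i<Suc n. f i) = f 0 + (\<Sum>i<n. f (Suc i))" by (rule sum.lessThan_Suc_shift)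
  moreover have "(\<Sum>i<Suc n. f i) = (\<Sum>i<n. f i) + f n" by simp
  ultimately show ?thesis using assms by (metis add.commute add_left_cancel)
qed

lemma rotate_period: "rotate (k + length v) v = rotate k v"
  by (metis mod_add_self2 rotate_conv_mod)

lemma cycdw_rotate: "cycdw c (rotate m v) = cycdw c v"
proof -
  let ?n = "length v"
  have "(\<Sum>i<?n. phi c (rotate (Suc i + m) v)) = (\<Sum>i<?n. phi c (rotate (Suc i) v))" for m
  proof (induction m)
    case 0 then show ?case by simp
  next
    case (Suc m)
    let ?f = "\<lambda>k. phi c (rotate (Suc k + m) v)"
    have "?f ?n = ?f 0"
      using rotate_period[of "Suc m" v] by (simp add: add.commute del: rotate_Suc)
    then have "(\<Sum>i<?n. ?f (Suc i)) = (\<Sum>i<?n. ?f i)" by (rule sum_shift)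
    moreover have "(\<Sum>i<?n. ?f (Suc i)) = (\<Sum>i<?n. phi c (rotate (Suc i + Suc m) v))"
      by (simp del: rotate_Suc)
    ultimately show ?case using Suc by simp
  qed
  then show ?thesis unfolding cycdw_rot by (simp add: rotate_rotate del: rotate_Suc)
qed

lemma cycdw_swap: "cycdw c (u @ v) = cycdw c (v @ u)"
  by (metis cycdw_rotate rotate_append)

lemma lin_phi: "lin F (phi c t) = (if t \<noteq> [] \<and> last t = c then F (butlast t) else 0)"
  by (simp add: phi_def lin_mono lin_zero)

lemma psi_rot1: "(if t \<noteq> [] \<and> last t = a then lfw b (butlast t) else 0) =
   (if rotate1 t \<noteq> [] \<and> last (rotate1 t) = b then phi a (butlast (rotate1 t)) else 0)"
proof (cases t)
  case Nil then show ?thesis by simp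
next
  case (Cons h r)
  then show ?thesis by (cases "r = []") (auto simp: lfw_def phi_def)
qed

lemma swap_ident: "lin (lfw b) (cycdw a v) = lin (dLw a) (cycdw b v)"
proof -
  let ?n = "length v"
  let ?g = "\<lambda>t. (if t \<noteq> [] \<and> last t = b then phi a (butlast t) else 0)"
  have "lin (lfw b) (cycdw a v) = (\<Sum>i<?n. lin (lfw b) (phi a (rotate (Suc i) v)))"
    unfolding cycdw_rot by (rule lin_sum) (rule fin_phi)
  also have "\<dots> = (\<Sum>i<?n. ?g (rotate (Suc (Suc i)) v))"
    by (simp only: lin_phi psi_rot1 rotate_Suc[of "Suc _"])
  also have "\<dots> = (\<Sum>i<?n. ?g (rotate (Suc i) v))"
  proof (rule sum_shift[where f="\<lambda>k. ?g (rotate (Suc k) v)"])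
    show "?g (rotate (Suc ?n) v) = ?g (rotate (Suc 0) v)"
      using rotate_period[of 1 v] by (simp del: rotate_Suc)
  qed
  also have "\<dots> = (\<Sum>i<?n. lin (dLw a) (phi b (rotate (Suc i) v)))"
    by (simp only: lin_phi dLw_simp)
  also have "\<dots> = lin (dLw a) (cycdw b v)"
    unfolding cycdw_rot by (rule lin_sum[symmetric]) (rule fin_phi)
  finally show ?thesis .
qed



lemma Rev_apply: "Rev p w = p (rev w)" by (simp add: Rev_def)
lemma Rev_sum: "Rev (sum f A) = (\<Sum>a\<in>A. Rev (f a))"
  by (rule ext) (simp add: Rev_def fsum_apply)
lemma Rev_scl: "Rev (scl c p) = scl c (Rev p)" by (rule ext) (simp add: Rev_def)
lemma Rev_mono: "Rev (mono u) = mono (rev u)"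
  by (rule ext) (auto simp: Rev_def mono_def)
lemma Rev_zero: "Rev 0 = 0" by (rule ext) (simp add: Rev_def)
lemma Rev_diff: "Rev (p - q) = Rev p - Rev q" by (rule ext) (simp add: Rev_def)
lemma Rev_uminus: "Rev (- p) = - Rev p" by (rule ext) (simp add: Rev_def)

lemma Rev_lin: "Rev (lin F p) = lin (\<lambda>v. Rev (F v)) p"
  unfolding lin_def Rev_sum Rev_scl ..

lemma Rev_as_lin: "finpoly p \<Longrightarrow> Rev p = lin (\<lambda>v. mono (rev v)) p"
  using Rev_lin[of mono p] by (simp add: lin_self Rev_mono)

lemma lin_fdiff: "lin F p - lin G p = lin (\<lambda>v. F v - G v) p"
proof (rule ext)
  fix w
  show "(lin F p - lin G p) w = lin (\<lambda>v. F v - G v) p w"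
    by (simp add: lin_def fsum_apply sum_subtractf right_diff_distrib)
qed

lemma lin_fneg: "lin (\<lambda>v. - F v) p = - lin F p"
proof (rule ext)
  fix w
  show "lin (\<lambda>v. - F v) p w = (- lin F p) w"
    by (simp add: lin_def fsum_apply sum_negf)
qed

lemma cycdw_rev: "cycdw c (rev v) = Rev (cycdw c v)"
proof -
  let ?n = "length v"
  have "cycdw c (rev v) = (\<Sum>i<?n. if rev v ! (?n - Suc i) = c
      then mono (drop (Suc (?n - Suc i)) (rev v) @ take (?n - Suc i) (rev v)) else 0)"
    unfolding cycdw_def length_rev by (rule sum.nat_diff_reindex[symmetric])
  also have "\<dots> = (\<Sum>i<?n. Rev (if v ! i = c then mono (drop (Suc i) v @ take i v) else 0))"
  proof (rule sum.cong[OF refl])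
    fix i assume "i \<in> {..<?n}"
    then have i: "i < ?n" by simp
    have a: "rev v ! (?n - Suc i) = v ! i" using i by (simp add: rev_nth)
    have b: "drop (Suc (?n - Suc i)) (rev v) = rev (take i v)" using i by (simp add: drop_rev)
    have d: "take (?n - Suc i) (rev v) = rev (drop (Suc i) v)" using i by (simp add: take_rev)
    show "(if rev v ! (?n - Suc i) = c
      then mono (drop (Suc (?n - Suc i)) (rev v) @ take (?n - Suc i) (rev v)) else 0) =
      Rev (if v ! i = c then mono (drop (Suc i) v @ take i v) else 0)"
      unfolding a b d by (simp add: Rev_mono Rev_zero)
  qed
  also have "\<dots> = Rev (cycdw c v)" unfolding cycdw_def Rev_sum ..
  finally show ?thesis .
qed

lemma dLw_rev: "dLw c (rev v) = Rev (lfw c v)"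
  by (simp add: dLw_simp phi_def lfw_def last_rev Rev_mono Rev_zero)

lemma dL_Rev: assumes "finpoly p"
  shows "lin (dLw c) (Rev p) = Rev (lin (lfw c) p)"
proof -
  have "lin (dLw c) (Rev p) = lin (dLw c) (lin (\<lambda>v. mono (rev v)) p)"
    using assms by (simp add: Rev_as_lin)
  also have "\<dots> = lin (\<lambda>v. lin (dLw c) (mono (rev v))) p"
    using assms by (rule lin_comp) (rule fin_mono)
  also have "\<dots> = lin (\<lambda>v. Rev (lfw c v)) p" by (simp add: lin_mono dLw_rev)
  also have "\<dots> = Rev (lin (lfw c) p)" by (simp add: Rev_lin)
  finally show ?thesis .
qed

definition Ew :: "letter list \<Rightarrow> ncpoly" where
  "Ew v = lin (dLw X) (cycdw Y v) - lin (dLw Y) (cycdw X v)"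

lemma fin_Ew: "finpoly (Ew v)"
  unfolding Ew_def by (intro fin_diff lin_fin fin_cycdw fin_dLw)

lemma Ew_swap: "Ew (u @ v) = Ew (v @ u)"
  unfolding Ew_def by (simp add: cycdw_swap[of _ u v])

lemma Ew_rev: "Ew (rev v) = - Rev (Ew v)"
proof -
  have "Ew (rev v) = Rev (lin (lfw X) (cycdw Y v)) - Rev (lin (lfw Y) (cycdw X v))"
    unfolding Ew_def cycdw_rev by (simp add: dL_Rev fin_cycdw)
  also have "\<dots> = Rev (lin (dLw Y) (cycdw X v)) - Rev (lin (dLw X) (cycdw Y v))"
    by (simp add: swap_ident)
  also have "\<dots> = - Rev (Ew v)" unfolding Ew_def Rev_diff by simp
  finally show ?thesis .
qed



lemma lin_ncmul: assumes "finpoly a" "finpoly b"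
  shows "lin F (ncmul a b) = (\<Sum>u\<in>supp a. \<Sum>v\<in>supp b. scl (a u * b v) (F (u @ v)))"
proof -
  have "lin F (ncmul a b) = (\<Sum>u\<in>supp a. lin F (\<Sum>v\<in>supp b. scl (a u * b v) (mono (u @ v))))"
    unfolding ncmul_expand[OF assms] by (rule lin_sum) (intro fin_sum fin_scl fin_mono)
  also have "\<dots> = (\<Sum>u\<in>supp a. \<Sum>v\<in>supp b. scl (a u * b v) (F (u @ v)))"
    by (intro sum.cong refl) (simp add: lin_sum fin_scl fin_mono lin_scl lin_mono)
  finally show ?thesis .
qed

lemma Ew_comm: assumes "finpoly a" "finpoly b"
  shows "lin Ew (ncmul a b - ncmul b a) = 0"
proof -
  have "lin Ew (ncmul a b - ncmul b a) = lin Ew (ncmul a b) - lin Ew (ncmul b a)"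
    using assms by (intro lin_diff fin_ncmul)
  also have "lin Ew (ncmul b a) = (\<Sum>v\<in>supp b. \<Sum>u\<in>supp a. scl (b v * a u) (Ew (v @ u)))"
    using assms by (intro lin_ncmul)
  also have "\<dots> = (\<Sum>u\<in>supp a. \<Sum>v\<in>supp b. scl (b v * a u) (Ew (v @ u)))"
    by (rule sum.swap)
  also have "\<dots> = (\<Sum>u\<in>supp a. \<Sum>v\<in>supp b. scl (a u * b v) (Ew (u @ v)))"
    by (intro sum.cong refl) (simp only: Ew_swap[of _ "_"] mult.commute)
  also have "\<dots> = lin Ew (ncmul a b)" using assms by (intro lin_ncmul[symmetric])
  finally have "lin Ew (ncmul a b - ncmul b a) = lin Ew (ncmul a b) - lin Ew (ncmul a b)" .
  then show ?thesis by (simp only: diff_self)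
qed

lemma Ew_cs: "c \<in> comspan \<Longrightarrow> lin Ew c = 0"
proof (induction rule: comspan.induct)
  case cs_zero then show ?case by (rule lin_zero)
next
  case (cs_comm a b) then show ?case by (rule Ew_comm)
next
  case (cs_add p q)
  have "lin Ew (p + q) = lin Ew p + lin Ew q" by (rule lin_add[OF cs_fin[OF cs_add(1)] cs_fin[OF cs_add(2)]])
  then show ?case by (simp only: cs_add.IH add_0_left)
next
  case (cs_scl p c)
  have "lin Ew (scl c p) = scl c (lin Ew p)" by (rule lin_scl[OF cs_fin[OF cs_scl(1)]])
  moreover have "scl c (0::ncpoly) = 0" by (rule ext) (simp add: scl_def)
  ultimately show ?case by (simp only: cs_scl.IH)
qed

lemma Ew_Rev: assumes "finpoly g" shows "lin Ew (Rev g) = - Rev (lin Ew g)"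
proof -
  have "lin Ew (Rev g) = lin Ew (lin (\<lambda>v. mono (rev v)) g)" using assms by (simp add: Rev_as_lin)
  also have "\<dots> = lin (\<lambda>v. lin Ew (mono (rev v))) g"
    using assms by (rule lin_comp) (rule fin_mono)
  also have "\<dots> = lin (\<lambda>v. - Rev (Ew v)) g" unfolding lin_mono Ew_rev ..
  also have "\<dots> = - Rev (lin Ew g)" unfolding lin_fneg Rev_lin ..
  finally show ?thesis .
qed

definition allw :: "(letter list \<Rightarrow> bool) \<Rightarrow> ncpoly \<Rightarrow> bool" where
  "allw P p \<longleftrightarrow> (\<forall>w. p w \<noteq> 0 \<longrightarrow> P w)"

lemma allw_diff: "allw P p \<Longrightarrow> allw P q \<Longrightarrow> allw P (p - q)"
  unfolding allw_def
proof (intro allI impI)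
  fix w assume a: "\<forall>w. p w \<noteq> 0 \<longrightarrow> P w" "\<forall>w. q w \<noteq> 0 \<longrightarrow> P w" and "(p - q) w \<noteq> 0"
  then have "p w \<noteq> 0 \<or> q w \<noteq> 0" by auto
  then show "P w" using a by blast
qed
lemma allw_sum: "(\<And>a. a \<in> A \<Longrightarrow> allw P (f a)) \<Longrightarrow> allw P (sum f A)"
proof -
  assume h: "\<And>a. a \<in> A \<Longrightarrow> allw P (f a)"
  show ?thesis unfolding allw_def
  proof (intro allI impI)
    fix w assume "sum f A w \<noteq> 0"
    then have "(\<Sum>a\<in>A. f a w) \<noteq> 0" by (simp add: fsum_apply)
    then obtain a where "a \<in> A" "f a w \<noteq> 0" by (meson sum.neutral)
    then show "P w" using h unfolding allw_def by blast
  qed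
qed
lemma allw_scl: "allw P p \<Longrightarrow> allw P (scl c p)" by (auto simp: allw_def)
lemma allw_lin: "(\<And>v. v \<in> supp p \<Longrightarrow> allw P (F v)) \<Longrightarrow> allw P (lin F p)"
  unfolding lin_def by (intro allw_sum allw_scl) auto
lemma allw_phi: "(t \<noteq> [] \<Longrightarrow> last t = c \<Longrightarrow> P (butlast t)) \<Longrightarrow> allw P (phi c t)"
  by (auto simp: allw_def phi_def mono_def)

lemma count_rotate1: "count_list (rotate1 xs) x = count_list xs x"
  by (cases xs) auto
lemma count_rotate: "count_list (rotate n xs) x = count_list xs x"
  by (induction n) (auto simp: count_rotate1)

lemma count_butlast: "t \<noteq> [] \<Longrightarrow> last t = c \<Longrightarrow>
   count_list t X = count_list (butlast t) X + (if c = X then 1 else 0)"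
proof -
  assume "t \<noteq> []" "last t = c"
  then have "t = butlast t @ [c]" using append_butlast_last_id[of t] by simp
  then have "count_list t X = count_list (butlast t @ [c]) X" by simp
  then show ?thesis by simp
qed

lemma allw_cycdw: "allw (\<lambda>w. count_list w X + (if c = X then 1 else 0) = count_list v X) (cycdw c v)"
  unfolding cycdw_rot
proof (intro allw_sum allw_phi)
  fix i t assume "t \<noteq> []" and "last (rotate (Suc i) v) = c" "rotate (Suc i) v \<noteq> []"
  then show "count_list (butlast (rotate (Suc i) v)) X + (if c = X then 1 else 0) = count_list v X"
    using count_butlast[of "rotate (Suc i) v" c] count_rotate[of "Suc i" v X] by simp
qed



lemma allY: "count_list u X = 0 \<Longrightarrow> u = replicate (length u) Y"
proof (induction u)
  case (Cons a u) then show ?case by (cases a) (auto split: if_splits)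
qed simp

lemma rev_allY: "count_list u X = 0 \<Longrightarrow> rev u = u"
  by (metis allY rev_replicate)

lemma comm_allY: "count_list u X = 0 \<Longrightarrow> count_list v X = 0 \<Longrightarrow> u @ v = v @ u"
  by (metis allY replicate_add add.commute)

lemma cs_tri: assumes "mono a - mono c \<in> comspan" "mono b - mono c \<in> comspan"
  shows "mono a - mono b \<in> comspan"
proof -
  have "(mono a - mono c) - (mono b - mono c) \<in> comspan" using assms by (rule cs_diff)
  moreover have "(mono a - mono c) - (mono b - mono c) = mono a - mono b"
    by (rule ext) simp
  ultimately show ?thesis by simp
qed

lemma cs_refl: "mono a - mono a \<in> comspan"
  using cs_zero by simp

lemma split_count: assumes "count_list w X = Suc k"
  obtains u r where "w = u @ X # r" "count_list u X = 0" "count_list r X = k"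
proof -
  have "X \<in> set w" using assms by (metis count_list_0_iff nat.simps(3))
  then obtain u r where "w = u @ X # r" "X \<notin> set u" by (meson split_list_first)
  moreover then have "count_list u X = 0" by (simp add: count_list_0_iff)
  moreover then have "count_list r X = k" using assms \<open>w = u @ X # r\<close> by simp
  ultimately show ?thesis using that by blast
qed

lemma word_rev: assumes "count_list w X \<le> 2"
  shows "mono w - mono (rev w) \<in> comspan"
proof -
  consider "count_list w X = 0" | "count_list w X = Suc 0" | "count_list w X = Suc (Suc 0)"
    using assms by linarith
  then show ?thesis
  proof cases
    case 1
    then show ?thesis using rev_allY[OF 1] cs_refl by simp
  next
    case 2
    then obtain u1 u2 where w: "w = u1 @ X # u2" "count_list u1 X = 0" "count_list u2 X = 0"
      by (rule split_count)
    have r: "rev w = u2 @ X # u1" using w by (simp add: rev_allY)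
    have a: "mono w - mono (X # u2 @ u1) \<in> comspan" using cs_rot[of u1 "X # u2"] w by simp
    have b: "mono (rev w) - mono (X # u2 @ u1) \<in> comspan"
      using cs_rot[of u2 "X # u1"] r comm_allY[OF w(2,3)] by simp
    show ?thesis by (rule cs_tri[OF a b])
  next
    case 3
    then obtain u1 r where w: "w = u1 @ X # r" "count_list u1 X = 0" "count_list r X = Suc 0"
      by (rule split_count)
    from w(3) obtain u2 u3 where r: "r = u2 @ X # u3" "count_list u2 X = 0" "count_list u3 X = 0"
      by (rule split_count)
    have rw: "rev w = u3 @ X # u2 @ X # u1" using w r by (simp add: rev_allY)
    have a: "mono w - mono (X # u2 @ X # u3 @ u1) \<in> comspan"
      using cs_rot[of u1 "X # u2 @ X # u3"] w r by simp
    have b: "mono (rev w) - mono (X # u2 @ X # u3 @ u1) \<in> comspan"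
      using cs_rot[of u3 "X # u2 @ X # u1"] rw comm_allY[OF w(2) r(3)] by simp
    show ?thesis by (rule cs_tri[OF a b])
  qed
qed

lemma length_count: "length w = count_list w X + count_list w Y"
proof (induction w)
  case (Cons a w) then show ?case by (cases a) auto
qed simp

lemma tr_cs: assumes "p \<in> comspan" shows "tr p = tr 0"
proof -
  have "p - q \<in> comspan \<longleftrightarrow> 0 - q \<in> comspan" for q
  proof
    assume "p - q \<in> comspan"
    from cs_diff[OF this assms] show "0 - q \<in> comspan" by (simp add: diff_diff_eq2 diff_add_eq)
  next
    assume "0 - q \<in> comspan"
    from cs_add[OF assms this] show "p - q \<in> comspan" by simp
  qed
  then show ?thesis unfolding tr_def by blast
qed

lemma allw_supp: "allw P p \<Longrightarrow> v \<in> supp p \<Longrightarrow> P v"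
  by (auto simp: allw_def supp_def)

lemma allw_Ew: "allw (\<lambda>w. count_list w X + 1 = count_list v X) (Ew v)"
  unfolding Ew_def
proof (intro allw_diff allw_lin)
  fix v' assume "v' \<in> supp (cycdw Y v)"
  then have c: "count_list v' X = count_list v X" using allw_supp[OF allw_cycdw[of Y v]] by simp
  show "allw (\<lambda>w. count_list w X + 1 = count_list v X) (dLw X v')"
    unfolding dLw_simp
    by (rule allw_phi) (use c count_butlast[of v' X] in simp)
next
  fix v' assume "v' \<in> supp (cycdw X v)"
  then have c: "count_list v' X + 1 = count_list v X" using allw_supp[OF allw_cycdw[of X v]] by simp
  show "allw (\<lambda>w. count_list w X + 1 = count_list v X) (dLw Y v')"
    unfolding dLw_simp
    by (rule allw_phi) (use c count_butlast[of v' Y] in simp)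
qed



lemma div_Ew: assumes "finpoly g" shows "divergence (uGamma g) = tr (lin Ew g)"
proof -
  let ?f = "\<lambda>c. if c = X then cycd Y g else - cycd X g"
  have derX: "uGamma g (gen c) = ?f c" for c
  proof -
    have "uGamma g (gen c) = lin (derw ?f) (mono [c])"
      unfolding uGamma_def der_def lin_def gen_def ..
    also have "\<dots> = derw ?f [c]" by (rule lin_mono)
    also have "\<dots> = ncmul (ncmul (mono []) (?f c)) (mono [])" by (simp add: derw_def)
    also have "\<dots> = ?f c" by (simp only: ncmul_one_left ncmul_one_right)
    finally show ?thesis .
  qed
  have fY: "finpoly (lin (cycdw Y) g)" and fX: "finpoly (lin (cycdw X) g)"
    using assms by (intro lin_fin fin_cycdw, assumption)+
  have "dL X (uGamma g (gen X)) + dL Y (uGamma g (gen Y))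
     = lin (dLw X) (lin (cycdw Y) g) + lin (dLw Y) (- lin (cycdw X) g)"
    unfolding derX dL_lin cycd_lin by simp
  also have "\<dots> = lin (dLw X) (lin (cycdw Y) g) - lin (dLw Y) (lin (cycdw X) g)"
    unfolding lin_uminus[OF fX] by simp
  also have "\<dots> = lin (\<lambda>v. lin (dLw X) (cycdw Y v)) g - lin (\<lambda>v. lin (dLw Y) (cycdw X v)) g"
    using assms by (simp only: lin_comp fin_cycdw)
  also have "\<dots> = lin Ew g" unfolding lin_fdiff Ew_def ..
  finally show ?thesis unfolding divergence_def by simp
qed

lemma Sg_minus_cs: assumes "finpoly g" "tr g \<in> FL"
  shows "Sg g - g \<in> comspan"
proof -
  obtain n :: nat and a b where tg: "tr g = tr (\<Sum>k<n. ncmul (a k) (b k))" and lab: "\<forall>k<n. a k \<in> lie \<and> b k \<in> lie"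
    using assms(2) unfolding FL_def by blast
  let ?P = "\<Sum>k<n. ncmul (a k) (b k)"
  let ?Q = "\<Sum>k<n. ncmul (b k) (a k)"
  have "g \<in> tr g" using assms(1) cs_zero by (simp add: tr_def)
  then have "g \<in> tr ?P" using tg by simp
  then have c1: "?P - g \<in> comspan" unfolding tr_def by blast
  have "Sg ?P = ?Q" unfolding Sg_sum
  proof (rule sum.cong[OF refl])
    fix k assume "k \<in> {..<n}"
    then have "Sg (a k) = - a k" "Sg (b k) = - b k" using lab lie_S by auto
    then show "Sg (ncmul (a k) (b k)) = ncmul (b k) (a k)"
      by (simp only: Sg_ncmul ncmul_neg)
  qed
  have c2: "?P - ?Q \<in> comspan"
  proof -
    have "(\<Sum>k<n. ncmul (a k) (b k) - ncmul (b k) (a k)) \<in> comspan"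
      using lab lie_S by (intro cs_sum cs_comm) auto
    then show ?thesis by (simp only: sum_subtractf)
  qed
  have c3: "?Q - Sg g \<in> comspan"
    using cs_Sg[OF c1] \<open>Sg ?P = ?Q\<close> by (simp only: Sg_diff)
  have "(?P - g) - (?P - ?Q) - (?Q - Sg g) \<in> comspan"
    by (intro cs_diff c1 c2 c3)
  moreover have "(?P - g) - (?P - ?Q) - (?Q - Sg g) = Sg g - g"
    by (rule ext) simp
  ultimately show ?thesis by simp
qed

theorem mainTheorem16:
  fixes g :: ncpoly and i j :: nat
  assumes "finpoly g"
    and "homog g i j"
    and "tr g \<in> FL"
    and "even (i + j)"
    and "i \<le> 3"
  shows "divergence (uGamma g) = tr 0"
proof -
  have "Sg g = Rev g"
  proof (rule ext)
    fix w
    show "Sg g w = Rev g w"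
    proof (cases "g (rev w) = 0")
      case True then show ?thesis by (simp add: Sg_def Rev_def)
    next
      case False
      then have "count_list (rev w) X = i" "count_list (rev w) Y = j"
        using assms(2) unfolding homog_def by auto
      then have "length w = i + j" using length_count[of "rev w"] by simp
      then have "(-1::real) ^ length w = 1" using assms(4) by simp
      then show ?thesis by (simp add: Sg_def Rev_def)
    qed
  qed
  then have revcs: "Rev g - g \<in> comspan" using Sg_minus_cs[OF assms(1,3)] by simp
  have fRg: "finpoly (Rev g)" using assms(1) by (simp add: Rev_as_lin lin_fin fin_mono)
  define h where "h = lin Ew g"
  have fh: "finpoly h" unfolding h_def using assms(1) by (intro lin_fin fin_Ew)
  have "lin Ew (Rev g) - h = 0"
    unfolding h_def using Ew_cs[OF revcs] lin_diff[OF fRg assms(1), of Ew] by simp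
  then have "lin Ew (Rev g) = h" by simp
  then have hh: "h = - Rev h" using Ew_Rev[OF assms(1)] unfolding h_def by simp
  have cnt: "allw (\<lambda>w. count_list w X + 1 = i) h"
    unfolding h_def
  proof (rule allw_lin)
    fix v assume "v \<in> supp g"
    then have "count_list v X = i" using assms(2) by (auto simp: homog_def supp_def)
    then show "allw (\<lambda>w. count_list w X + 1 = i) (Ew v)" using allw_Ew[of v] by simp
  qed
  have "h - Rev h \<in> comspan"
  proof -
    have "h - Rev h = lin mono h - lin (\<lambda>v. mono (rev v)) h"
      using fh by (simp add: lin_self Rev_as_lin)
    also have "\<dots> = lin (\<lambda>v. mono v - mono (rev v)) h" by (rule lin_fdiff)
    finally have e: "h - Rev h = lin (\<lambda>v. mono v - mono (rev v)) h" .
    have "lin (\<lambda>v. mono v - mono (rev v)) h \<in> comspan"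
      unfolding lin_def
    proof (intro cs_sum cs_scl word_rev)
      fix v assume "v \<in> supp h"
      then show "count_list v X \<le> 2" using allw_supp[OF cnt] assms(5) by fastforce
    qed
    then show ?thesis using e by simp
  qed
  then have "scl (1/2) (h - Rev h) \<in> comspan" by (rule cs_scl)
  moreover have "scl (1/2) (h - Rev h) = h"
  proof (rule ext)
    fix w
    have "h w = - Rev h w" using hh by (metis uminus_apply)
    then show "scl (1/2) (h - Rev h) w = h w" by (simp add: scl_def)
  qed
  ultimately have "h \<in> comspan" by simp
  then show ?thesis using div_Ew[OF assms(1)] tr_cs unfolding h_def by simp
qed

end
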